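(* Let $H$ be a finite-dimensional real or complex Hilbert space with inner product $(\cdot,\cdot)$ and norm $\|u\|=(u,u)^{1/2}$, and let $A:H\to H$ be a self-adjoint operator with eigenvalues $0<\lambda_1\le\lambda_2\le\dots\le\lambda_K$, so that $A\ge \delta I$ with $\delta=\lambda_1>0$. Let $f$ be a real function defined and nonzero on $[\lambda_1,\lambda_K]$ with $f(\lambda_k)>0$ for all $k$, and write $f^{-1}(\lambda)=1/f(\lambda)$. For $\varphi\in H$ let $u=f^{-1}(A)\varphi$ be the solution of $f(A)u=\varphi$. Let $m\ge 1$ and let $a_i>0$, $b_i>0$, $i=1,\dots,m$, be such that the function $r(\lambda)=\sum_{i=1}^m a_i (b_i+\lambda)^{-1}$ satisfies $$|r(\lambda)-f^{-1}(\lambda)|\le \varepsilon\quad\text{for all }\lambda\in[\lambda_1,\lambda_K].$$ Let $w_i\in H$ be the solutions of $(b_iI+A)w_i=\varphi$, $i=1,\dots,m$, and let $\tilde w_i\in H$ satisfy $$\|\tilde w_i-w_i\|\le \varepsilon_i\|\varphi\|,\qquad \varepsilon_i=\frac{\varepsilon_0}{b_i+\delta},\quad i=1,\dots,m,$$ for some $\varepsilon_0\ge 0$. Define $\hat u=\sum_{i=1}^m a_i\tilde w_i$. Then $$\|\hat u-u\|\le\big(\varepsilon+\varepsilon_0\,(f^{-1}(\delta)+\varepsilon)\big)\|\varphi\|.$$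
   Context: Operator functions are defined spectrally: if $\psi_k$ ($\|\psi_k\|=1$) are orthonormal eigenvectors of $A$ with $A\psi_k=\lambda_k\psi_k$, then $g(A)u=\sum_{k=1}^K g(\lambda_k)(u,\psi_k)\psi_k$. In particular $f^{-1}(A)=\sum_k f(\lambda_k)^{-1}(\cdot,\psi_k)\psi_k$, and $f^{-1}(\delta)=1/f(\lambda_1)$. *)

theory Defs
  imports "HOL-Analysis.Analysis"
begin

text \<open>The Hilbert space H is modelled as K-dimensional coordinate space 'a^'n with
 K = CARD('n), scalars 'a = real (conjugation id) or complex (conjugation cnj),
 inner product (x,y) = sum_i x_i * conj(y_i). The library norm on 'a^'n is the
 Euclidean norm, which coincides with (u,u)^(1/2).\<close>

definition sinner :: "('a::comm_semiring_1 \<Rightarrow> 'a) \<Rightarrow> 'a^'n \<Rightarrow> 'a^'n \<Rightarrow> 'a" where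
  "sinner cj x y = (\<Sum>i\<in>UNIV. x$i * cj (y$i))"

text \<open>Spectral operator function: g(A)u = sum_k g(lambda_k) (u,psi_k) psi_k
 (eigenvalues indexed 0..K-1).\<close>
definition spec_fun :: "('a::real_normed_field \<Rightarrow> 'a) \<Rightarrow> (nat \<Rightarrow> 'a^'n) \<Rightarrow> (nat \<Rightarrow> real)
    \<Rightarrow> (real \<Rightarrow> real) \<Rightarrow> 'a^'n \<Rightarrow> 'a^'n" where
  "spec_fun cj \<psi> lam g u =
     (\<Sum>k<CARD('n). (of_real (g (lam k)) * sinner cj u (\<psi> k)) *s \<psi> k)"

text \<open>The statement for a given scalar field with conjugation cj: hypotheses imply the estimate.
 Indices are 0-based: lambda_1 = lam 0, lambda_K = lam (K-1), i = 0..m-1.\<close>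
definition spectral_estimate ::
  "('a::real_normed_field \<Rightarrow> 'a) \<Rightarrow> ('a^'n \<Rightarrow> 'a^'n) \<Rightarrow> (nat \<Rightarrow> 'a^'n) \<Rightarrow> (nat \<Rightarrow> real)
   \<Rightarrow> (real \<Rightarrow> real) \<Rightarrow> 'a^'n \<Rightarrow> nat \<Rightarrow> (nat \<Rightarrow> real) \<Rightarrow> (nat \<Rightarrow> real)
   \<Rightarrow> (nat \<Rightarrow> 'a^'n) \<Rightarrow> (nat \<Rightarrow> 'a^'n) \<Rightarrow> real \<Rightarrow> real \<Rightarrow> bool" where
  "spectral_estimate cj A \<psi> lam f \<phi> m a b w wt \<epsilon> \<epsilon>0 \<longleftrightarrow>
    ((\<forall>x y. A (x + y) = A x + A y) \<and>
     (\<forall>c x. A (c *s x) = c *s A x) \<and>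
     (\<forall>x y. sinner cj (A x) y = sinner cj x (A y)) \<and>
     (\<forall>j<CARD('n). \<forall>k<CARD('n). sinner cj (\<psi> j) (\<psi> k) = (if j = k then 1 else 0)) \<and>
     (\<forall>k<CARD('n). A (\<psi> k) = of_real (lam k) *s \<psi> k) \<and>
     0 < lam 0 \<and>
     (\<forall>j k. j \<le> k \<longrightarrow> k < CARD('n) \<longrightarrow> lam j \<le> lam k) \<and>
     (\<forall>x\<in>{lam 0 .. lam (CARD('n) - 1)}. f x \<noteq> 0) \<and>
     (\<forall>k<CARD('n). 0 < f (lam k)) \<and>
     1 \<le> m \<and>
     (\<forall>i<m. 0 < a i \<and> 0 < b i) \<and>
     (\<forall>x\<in>{lam 0 .. lam (CARD('n) - 1)}.
        \<bar>(\<Sum>i<m. a i / (b i + x)) - 1 / f x\<bar> \<le> \<epsilon>) \<and>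
     (\<forall>i<m. of_real (b i) *s w i + A (w i) = \<phi>) \<and>
     0 \<le> \<epsilon>0 \<and>
     (\<forall>i<m. norm (wt i - w i) \<le> (\<epsilon>0 / (b i + lam 0)) * norm \<phi>))
   \<longrightarrow>
    norm ((\<Sum>i<m. of_real (a i) *s wt i) - spec_fun cj \<psi> lam (\<lambda>x. 1 / f x) \<phi>)
      \<le> (\<epsilon> + \<epsilon>0 * (1 / f (lam 0) + \<epsilon>)) * norm \<phi>"

end

theory Submission
  imports Defs
begin

lemma sinner_sum_left:
  "sinner cj (\<Sum>k\<in>S. g k) y = (\<Sum>k\<in>S. sinner cj (g k) y)"
  unfolding sinner_def by (simp add: sum_component sum_distrib_right sum.swap[of _ S])

lemma sinner_scale_left: "sinner cj (c *s x) y = c * sinner cj x y"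
  unfolding sinner_def by (simp add: sum_distrib_left mult.assoc)

lemma sinner_add_left: "sinner cj (x + z) y = sinner cj x y + sinner cj z y"
  unfolding sinner_def by (simp add: sum.distrib distrib_right)

lemma sinner_diff_left: "sinner cj (x - z) y = sinner cj x y - sinner cj z y"
  for x :: "'a::comm_ring_1^'n"
  unfolding sinner_def by (simp add: sum_subtractf left_diff_distrib)

lemma sinner_scale_right:
  assumes "\<And>x y. cj (x * y) = cj x * cj y"
  shows "sinner cj x (c *s y) = cj c * sinner cj x y"
  unfolding sinner_def by (simp add: assms sum_distrib_left algebra_simps)

lemma complete:
  fixes \<psi> :: "nat \<Rightarrow> 'a::field^'n"
  assumes orth: "\<forall>j<CARD('n). \<forall>k<CARD('n). sinner cj (\<psi> j) (\<psi> k) = (if j = k then 1 else 0)"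
  shows "x = (\<Sum>k<CARD('n). sinner cj x (\<psi> k) *s \<psi> k)"
proof -
  let ?K = "CARD('n)"
  let ?B = "\<psi> ` {..<?K}"
  have inj: "inj_on \<psi> {..<?K}"
  proof (rule inj_onI)
    fix j k assume j: "j \<in> {..<?K}" and k: "k \<in> {..<?K}" and e: "\<psi> j = \<psi> k"
    show "j = k"
    proof (rule ccontr)
      assume "j \<noteq> k"
      then have "sinner cj (\<psi> j) (\<psi> k) = 0" using orth j k by auto
      moreover have "sinner cj (\<psi> j) (\<psi> j) = 1" using orth j by auto
      ultimately show False using e by simp
    qed
  qed
  have cardB: "card ?B = vec.dim (UNIV :: ('a^'n) set)"
    using card_image[OF inj] by (simp add: card_cart_basis)
  have coef: "g (\<psi> j) = 0" if s: "(\<Sum>v\<in>?B. g v *s v) = 0" and j: "j < ?K" for g j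
  proof -
    have "0 = sinner cj (\<Sum>v\<in>?B. g v *s v) (\<psi> j)" using s by (simp add: sinner_def)
    also have "\<dots> = (\<Sum>k<?K. g (\<psi> k) * sinner cj (\<psi> k) (\<psi> j))"
      by (simp add: sinner_sum_left sinner_scale_left sum.reindex[OF inj])
    also have "\<dots> = (\<Sum>k<?K. if k = j then g (\<psi> j) else 0)"
      using orth j by (intro sum.cong) auto
    also have "\<dots> = g (\<psi> j)" using j by simp
    finally show ?thesis by simp
  qed
  have indep: "vec.independent ?B"
    by (rule vec.independent_if_scalars_zero) (use coef in auto)
  have "UNIV \<subseteq> vec.span ?B"
    using vec.card_eq_dim[of ?B UNIV] cardB indep by auto
  then have "x \<in> range (\<lambda>u. \<Sum>v\<in>?B. u v *s v)"
    using vec.span_finite[of ?B] by auto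
  then obtain u where u: "x = (\<Sum>v\<in>?B. u v *s v)" by auto
  then have u2: "x = (\<Sum>k<?K. u (\<psi> k) *s \<psi> k)" by (simp add: sum.reindex[OF inj])
  have "sinner cj x (\<psi> j) = u (\<psi> j)" if j: "j < ?K" for j
  proof -
    have "sinner cj x (\<psi> j) = (\<Sum>k<?K. u (\<psi> k) * sinner cj (\<psi> k) (\<psi> j))"
      by (subst u2) (simp add: sinner_sum_left sinner_scale_left)
    also have "\<dots> = (\<Sum>k<?K. if k = j then u (\<psi> j) else 0)"
      using orth j by (intro sum.cong) auto
    also have "\<dots> = u (\<psi> j)" using j by simp
    finally show ?thesis .
  qed
  then show ?thesis by (subst u2) (intro sum.cong; simp)
qed

locale cjs =
  fixes cj :: "'a::real_normed_field \<Rightarrow> 'a"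
  assumes cadd: "\<And>x y. cj (x + y) = cj x + cj y"
    and cmul: "\<And>x y. cj (x * y) = cj x * cj y"
    and creal: "\<And>r. cj (of_real r) = of_real r"
    and cnorm: "\<And>x. x * cj x = of_real (norm x ^ 2)"
begin

lemma c0: "cj 0 = 0" using creal[of 0] by simp

lemma csum: "cj (sum g S) = (\<Sum>k\<in>S. cj (g k))"
  by (induction S rule: infinite_finite_induct) (auto simp: c0 cadd)

lemma sinner_sum_right:
  "sinner cj x (\<Sum>k\<in>S. g k) = (\<Sum>k\<in>S. sinner cj x (g k))"
  unfolding sinner_def by (simp add: sum_component csum sum_distrib_left sum.swap[of _ S])

lemma sinner_self: "sinner cj x x = of_real (norm x ^ 2)"
proof -
  have "norm x ^ 2 = (\<Sum>i\<in>UNIV. norm (x$i) ^ 2)"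
    unfolding norm_vec_def L2_set_def by (simp add: sum_nonneg)
  then show ?thesis unfolding sinner_def by (simp add: cnorm)
qed

lemma parseval:
  fixes \<psi> :: "nat \<Rightarrow> 'a^'n"
  assumes orth: "\<forall>j<CARD('n). \<forall>k<CARD('n). sinner cj (\<psi> j) (\<psi> k) = (if j = k then 1 else 0)"
  shows "norm (\<Sum>k<CARD('n). c k *s \<psi> k) ^ 2 = (\<Sum>k<CARD('n). norm (c k) ^ 2)"
proof -
  let ?K = "CARD('n)"
  let ?y = "\<Sum>k<CARD('n). c k *s \<psi> k"
  have in1: "sinner cj (\<psi> j) ?y = cj (c j)" if j: "j < ?K" for j
  proof -
    have "sinner cj (\<psi> j) ?y = (\<Sum>k<?K. cj (c k) * sinner cj (\<psi> j) (\<psi> k))"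
      by (simp add: sinner_sum_right sinner_scale_right cmul)
    also have "\<dots> = (\<Sum>k<?K. if k = j then cj (c j) else 0)"
      using orth j by (intro sum.cong) auto
    also have "\<dots> = cj (c j)" using j by simp
    finally show ?thesis .
  qed
  have "of_real (norm ?y ^ 2) = sinner cj ?y ?y" by (simp add: sinner_self)
  also have "\<dots> = (\<Sum>j<?K. c j * sinner cj (\<psi> j) ?y)"
    by (simp add: sinner_sum_left sinner_scale_left)
  also have "\<dots> = (\<Sum>j<?K. of_real (norm (c j) ^ 2))"
    using in1 by (intro sum.cong) (auto simp: cnorm)
  also have "\<dots> = (of_real (\<Sum>j<?K. norm (c j) ^ 2) :: 'a)" by simp
  finally show ?thesis using of_real_eq_iff by blast
qed

end

lemma ofreal_smult: "((of_real a :: 'a) *s x) = a *\<^sub>R (x :: 'a::real_normed_field^'n)"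
proof (rule vec_eq_iff[THEN iffD2], rule allI)
  fix i
  have "a *\<^sub>R (x$i) = of_real a * x$i" by (rule scaleR_conv_of_real)
  then show "((of_real a :: 'a) *s x) $ i = (a *\<^sub>R x) $ i" by simp
qed

lemma norm_ofreal_smult: "norm ((of_real a :: 'a) *s x) = \<bar>a\<bar> * norm (x :: 'a::real_normed_field^'n)"
  by (simp add: ofreal_smult)

context cjs begin

lemma main:
  fixes A :: "'a^'n \<Rightarrow> 'a^'n" and \<psi> :: "nat \<Rightarrow> 'a^'n"
  assumes Asa: "\<forall>x y. sinner cj (A x) y = sinner cj x (A y)"
    and orth: "\<forall>j<CARD('n). \<forall>k<CARD('n). sinner cj (\<psi> j) (\<psi> k) = (if j = k then 1 else 0)"
    and eig: "\<forall>k<CARD('n). A (\<psi> k) = of_real (lam k) *s \<psi> k"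
    and l0: "0 < lam 0"
    and mono: "\<forall>j k. j \<le> k \<longrightarrow> k < CARD('n) \<longrightarrow> lam j \<le> lam k"
    and ab: "\<forall>i<m. 0 < a i \<and> 0 < b i"
    and approx: "\<forall>x\<in>{lam 0 .. lam (CARD('n) - 1)}.
        \<bar>(\<Sum>i<m. a i / (b i + x)) - 1 / f x\<bar> \<le> \<epsilon>"
    and weq: "\<forall>i<m. of_real (b i) *s w i + A (w i) = \<phi>"
    and e0: "0 \<le> \<epsilon>0"
    and wt: "\<forall>i<m. norm (wt i - w i) \<le> (\<epsilon>0 / (b i + lam 0)) * norm \<phi>"
  shows "norm ((\<Sum>i<m. of_real (a i) *s wt i) - spec_fun cj \<psi> lam (\<lambda>x. 1 / f x) \<phi>)
      \<le> (\<epsilon> + \<epsilon>0 * (1 / f (lam 0) + \<epsilon>)) * norm \<phi>"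
proof -
  let ?K = "CARD('n)"
  define s where "s k = sinner cj \<phi> (\<psi> k)" for k
  define r where "r x = (\<Sum>i<m. a i / (b i + x))" for x
  have Kpos: "0 < ?K" by simp
  have lamr: "lam k \<in> {lam 0 .. lam (?K - 1)}" if "k < ?K" for k
    using mono that by auto
  have lampos: "0 < lam k" if "k < ?K" for k
    using lamr[OF that] l0 by auto
  have a0: "\<bar>r (lam 0) - 1 / f (lam 0)\<bar> \<le> \<epsilon>"
    using approx lamr[OF Kpos] unfolding r_def by blast
  have eps: "0 \<le> \<epsilon>"
    using a0 abs_ge_zero[of "r (lam 0) - 1 / f (lam 0)"] by linarith
  have wexp: "w i = (\<Sum>k<?K. (of_real (1 / (b i + lam k)) * s k) *s \<psi> k)" if i: "i < m" for i
  proof -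
    have c: "sinner cj (w i) (\<psi> k) = of_real (1 / (b i + lam k)) * s k" if k: "k < ?K" for k
    proof -
      have "s k = sinner cj (of_real (b i) *s w i + A (w i)) (\<psi> k)"
        using weq i by (simp add: s_def)
      also have "\<dots> = of_real (b i) * sinner cj (w i) (\<psi> k) + cj (of_real (lam k)) * sinner cj (w i) (\<psi> k)"
        using Asa eig k by (simp add: sinner_add_left sinner_scale_left sinner_scale_right cmul)
      also have "\<dots> = of_real (b i + lam k) * sinner cj (w i) (\<psi> k)"
        by (simp add: creal distrib_right)
      finally have sk: "s k = of_real (b i + lam k) * sinner cj (w i) (\<psi> k)" .
      have nz: "b i + lam k \<noteq> 0" using ab i lampos[OF k] by auto
      have "of_real (1 / (b i + lam k)) * s k
          = of_real (1 / (b i + lam k) * (b i + lam k)) * sinner cj (w i) (\<psi> k)"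
        by (simp only: sk of_real_mult mult.assoc)
      also have "\<dots> = sinner cj (w i) (\<psi> k)" using nz by simp
      finally show ?thesis by simp
    qed
    have "w i = (\<Sum>k<?K. sinner cj (w i) (\<psi> k) *s \<psi> k)" by (rule complete[OF orth])
    also have "\<dots> = (\<Sum>k<?K. (of_real (1 / (b i + lam k)) * s k) *s \<psi> k)"
      using c by (intro sum.cong) auto
    finally show ?thesis .
  qed
  have usum: "(\<Sum>i<m. of_real (a i) *s w i) = (\<Sum>k<?K. (of_real (r (lam k)) * s k) *s \<psi> k)"
  proof -
    have "(\<Sum>i<m. of_real (a i) *s w i)
        = (\<Sum>i<m. \<Sum>k<?K. (of_real (a i / (b i + lam k)) * s k) *s \<psi> k)"
      using wexp by (intro sum.cong) (auto simp: vec.scale_sum_right vec.scale_scale mult.assoc)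
    also have "\<dots> = (\<Sum>k<?K. \<Sum>i<m. (of_real (a i / (b i + lam k)) * s k) *s \<psi> k)"
      by (rule sum.swap)
    also have "\<dots> = (\<Sum>k<?K. (of_real (r (lam k)) * s k) *s \<psi> k)"
      by (intro sum.cong) (auto simp: r_def vec.scale_sum_left[symmetric] sum_distrib_right)
    finally show ?thesis .
  qed
  have uexp: "spec_fun cj \<psi> lam (\<lambda>x. 1 / f x) \<phi> = (\<Sum>k<?K. (of_real (1 / f (lam k)) * s k) *s \<psi> k)"
    by (simp add: spec_fun_def s_def)
  define d where "d k = r (lam k) - 1 / f (lam k)" for k
  have diff: "(\<Sum>i<m. of_real (a i) *s w i) - spec_fun cj \<psi> lam (\<lambda>x. 1 / f x) \<phi>
      = (\<Sum>k<?K. (of_real (d k) * s k) *s \<psi> k)"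
    unfolding usum uexp sum_subtractf[symmetric] d_def
    by (intro sum.cong refl) (simp only: of_real_diff left_diff_distrib vec.scale_left_diff_distrib)
  have nphi: "norm \<phi> ^ 2 = (\<Sum>k<?K. norm (s k) ^ 2)"
  proof -
    have "\<phi> = (\<Sum>k<?K. s k *s \<psi> k)" unfolding s_def by (rule complete[OF orth])
    then have "norm \<phi> ^ 2 = norm (\<Sum>k<?K. s k *s \<psi> k) ^ 2" by simp
    also have "\<dots> = (\<Sum>k<?K. norm (s k) ^ 2)" by (rule parseval[OF orth])
    finally show ?thesis .
  qed
  have n1: "norm ((\<Sum>i<m. of_real (a i) *s w i) - spec_fun cj \<psi> lam (\<lambda>x. 1 / f x) \<phi>) \<le> \<epsilon> * norm \<phi>"
  proof (rule power2_le_imp_le)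
    have dk: "\<bar>d k\<bar> \<le> \<epsilon>" if "k < ?K" for k
      using approx lamr[OF that] by (simp add: d_def r_def)
    have "norm ((\<Sum>i<m. of_real (a i) *s w i) - spec_fun cj \<psi> lam (\<lambda>x. 1 / f x) \<phi>) ^ 2
        = (\<Sum>k<?K. norm (of_real (d k) * s k) ^ 2)"
      unfolding diff by (rule parseval[OF orth])
    also have "\<dots> = (\<Sum>k<?K. (d k)^2 * norm (s k) ^ 2)"
      by (simp add: norm_mult power_mult_distrib)
    also have "\<dots> \<le> (\<Sum>k<?K. \<epsilon>^2 * norm (s k) ^ 2)"
    proof (intro sum_mono mult_right_mono)
      fix k assume "k \<in> {..<?K}"
      then show "(d k)^2 \<le> \<epsilon>^2" using dk eps
        by (metis abs_ge_zero lessThan_iff power2_abs power_mono)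
    qed simp
    also have "\<dots> = (\<epsilon> * norm \<phi>) ^ 2"
      by (simp add: nphi sum_distrib_left power_mult_distrib)
    finally show "norm ((\<Sum>i<m. of_real (a i) *s w i) - spec_fun cj \<psi> lam (\<lambda>x. 1 / f x) \<phi>) ^ 2
        \<le> (\<epsilon> * norm \<phi>) ^ 2" .
    show "0 \<le> \<epsilon> * norm \<phi>" using eps by simp
  qed
  have n2: "norm (\<Sum>i<m. of_real (a i) *s (wt i - w i)) \<le> \<epsilon>0 * (1 / f (lam 0) + \<epsilon>) * norm \<phi>"
  proof -
    have "norm (\<Sum>i<m. of_real (a i) *s (wt i - w i)) \<le> (\<Sum>i<m. norm (of_real (a i) *s (wt i - w i)))"
      by (rule norm_sum)
    also have "\<dots> = (\<Sum>i<m. a i * norm (wt i - w i))"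
    proof (intro sum.cong refl)
      fix i assume "i \<in> {..<m}"
      then have "0 < a i" using ab by auto
      then show "norm (of_real (a i) *s (wt i - w i)) = a i * norm (wt i - w i)"
        unfolding norm_ofreal_smult by simp
    qed
    also have "\<dots> \<le> (\<Sum>i<m. a i * ((\<epsilon>0 / (b i + lam 0)) * norm \<phi>))"
      using ab wt by (intro sum_mono mult_left_mono) auto
    also have "\<dots> = \<epsilon>0 * norm \<phi> * r (lam 0)"
      by (simp add: r_def sum_distrib_left mult_ac)
    also have "\<dots> \<le> \<epsilon>0 * norm \<phi> * (1 / f (lam 0) + \<epsilon>)"
    proof (rule mult_left_mono)
      show "r (lam 0) \<le> 1 / f (lam 0) + \<epsilon>"
        using a0 by (simp add: abs_le_iff)
    qed (use e0 in simp)
    finally show ?thesis by (simp add: mult_ac)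
  qed
  have split: "(\<Sum>i<m. of_real (a i) *s wt i) - spec_fun cj \<psi> lam (\<lambda>x. 1 / f x) \<phi>
     = (\<Sum>i<m. of_real (a i) *s (wt i - w i))
       + ((\<Sum>i<m. of_real (a i) *s w i) - spec_fun cj \<psi> lam (\<lambda>x. 1 / f x) \<phi>)"
    by (simp add: vec.scale_right_diff_distrib sum_subtractf)
  have "norm ((\<Sum>i<m. of_real (a i) *s wt i) - spec_fun cj \<psi> lam (\<lambda>x. 1 / f x) \<phi>)
     \<le> \<epsilon>0 * (1 / f (lam 0) + \<epsilon>) * norm \<phi> + \<epsilon> * norm \<phi>"
    unfolding split using norm_triangle_ineq[of "\<Sum>i<m. of_real (a i) *s (wt i - w i)"
       "(\<Sum>i<m. of_real (a i) *s w i) - spec_fun cj \<psi> lam (\<lambda>x. 1 / f x) \<phi>"] n1 n2 by linarith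
  also have "\<dots> = (\<epsilon> + \<epsilon>0 * (1 / f (lam 0) + \<epsilon>)) * norm \<phi>"
    by (simp add: distrib_right)
  finally show ?thesis .
qed

lemma spec: "spectral_estimate cj A \<psi> lam f \<phi> m a b w wt \<epsilon> \<epsilon>0"
  unfolding spectral_estimate_def
  by (intro impI, elim conjE, rule main) assumption+

end

interpretation real_cj: cjs "id :: real \<Rightarrow> real"
  by unfold_locales (auto simp: power2_eq_square)

interpretation complex_cj: cjs cnj
proof unfold_locales
  fix x :: complex
  show "x * cnj x = of_real (norm x ^ 2)" by (rule complex_norm_square[symmetric])
qed auto

theorem theorem1:
  shows "(\<forall>(A :: real^'n \<Rightarrow> real^'n) \<psi> lam f \<phi> m a b w wt \<epsilon> \<epsilon>0.
            spectral_estimate id A \<psi> lam f \<phi> m a b w wt \<epsilon> \<epsilon>0) \<and>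
         (\<forall>(A :: complex^'n \<Rightarrow> complex^'n) \<psi> lam f \<phi> m a b w wt \<epsilon> \<epsilon>0.
            spectral_estimate cnj A \<psi> lam f \<phi> m a b w wt \<epsilon> \<epsilon>0)"
  by (simp only: real_cj.spec complex_cj.spec simp_thms)

end
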